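(* There is an absolute constant $c>0$ such that the following holds. For any $N,T\ge1$, suppose the interference graph on the $N$ individuals has no edges. Then for any (possibly adaptive) design and any estimator $\widehat\Delta$ (a function of the observed treatments $W$ and outcomes $Y$), there exists an instance of the model (satisfying the model assumptions, with the edgeless interference graph) under which $\mathbb E[(\widehat\Delta-\Delta)^2]\ge c/(NT)$; that is, ${\rm MSE}(\widehat\Delta)=\Omega(1/(NT))$.
   Context: Model. There are $N$ individuals $U$ ($|U|=N$) and $T$ rounds $[T]=\{1,\dots,T\}$; with an edgeless interference graph each individual's neighborhood is $\mathcal N(i)=\{i\}$. Treatments $W\in\{0,1\}^{N\times T}$ are assigned by a design (here possibly adaptive, i.e., treatments may depend on previously observed data). Each individual has a state $S_{it}$ in a state space $\mathcal S$ evolving as a Markov chain with kernel $P^{W_{it}}_{it}$ depending on its own treatment; outcomes are $Y_{it}=\mu_{it}(S_{it},W_{it})+\epsilon_{it}$ with $\mu_{it}\in[0,1]$ and mean-zero noise with $\mathbb E[\epsilon_{it}\epsilon_{i't'}\mid S,W]$ bounded by $\sigma^2\mathbbm 1(i=i',t=t')$; the kernels satisfy a rapid-mixing contraction $d_{\rm TV}(fP,f'P)\le e^{-1/t_{\rm mix}}d_{\rm TV}(f,f')$. Only $W$ and $Y$ are observed. The estimand is the global average treatment effect $\Delta=\frac1{NT}\sum_{(i,t)}\big(\mathbb E[Y_{it}\mid W=\mathbf 1]-\mathbb E[Y_{it}\mid W=\mathbf 0]\big)$. *)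

theory Defs
  imports "HOL-Probability.Probability"
begin

text \<open>Individuals are 0..<N, rounds are 1..T, states are natural numbers.
  Conventions for the arguments:
   init i                 : distribution of the initial state S_{i,1}
   P i t w s              : kernel P^w_{it}, distribution of S_{i,t+1} given S_{it} = s, W_{it} = w
   mu i t s w             : mean outcome mu_{it}(s,w)
   noise i t s w          : distribution of eps_{it} given S_{it} = s, W_{it} = w
   design W Y t           : (adaptive) distribution of the treatment vector of round t,
                            given the observed treatments W and outcomes Y of rounds < t
  With an edgeless interference graph, everything about individual i depends only
  on i's own treatment.\<close>

type_synonym trajectory = "(nat \<Rightarrow> nat \<Rightarrow> nat) \<times> (nat \<Rightarrow> nat \<Rightarrow> bool) \<times> (nat \<Rightarrow> nat \<Rightarrow> real)"
type_synonym design = "(nat \<Rightarrow> nat \<Rightarrow> bool) \<Rightarrow> (nat \<Rightarrow> nat \<Rightarrow> real) \<Rightarrow> nat \<Rightarrow> (nat \<Rightarrow> bool) pmf"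

fun traj :: "nat \<Rightarrow> (nat \<Rightarrow> nat pmf) \<Rightarrow> (nat \<Rightarrow> nat \<Rightarrow> bool \<Rightarrow> nat \<Rightarrow> nat pmf)
    \<Rightarrow> (nat \<Rightarrow> nat \<Rightarrow> nat \<Rightarrow> bool \<Rightarrow> real) \<Rightarrow> (nat \<Rightarrow> nat \<Rightarrow> nat \<Rightarrow> bool \<Rightarrow> real pmf)
    \<Rightarrow> design \<Rightarrow> nat \<Rightarrow> trajectory pmf" where
  "traj N init P mu noise design 0 =
     map_pmf (\<lambda>s0. (\<lambda>i u. if u = 1 then s0 i else 0, \<lambda>i u. False, \<lambda>i u. 0))
       (Pi_pmf {..<N} 0 init)"
| "traj N init P mu noise design (Suc k) =
     bind_pmf (traj N init P mu noise design k) (\<lambda>(S, W, Y).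
     bind_pmf (design W Y (Suc k)) (\<lambda>w.
     bind_pmf (Pi_pmf {..<N} 0 (\<lambda>i. map_pmf (\<lambda>e. mu i (Suc k) (S i (Suc k)) (w i) + e)
                                   (noise i (Suc k) (S i (Suc k)) (w i)))) (\<lambda>y.
     bind_pmf (Pi_pmf {..<N} 0 (\<lambda>i. P i (Suc k) (w i) (S i (Suc k)))) (\<lambda>s'.
     return_pmf (\<lambda>i u. if u = Suc (Suc k) then s' i else S i u,
                 \<lambda>i u. if u = Suc k then (i < N \<and> w i) else W i u,
                 \<lambda>i u. if u = Suc k then y i else Y i u)))))"

definition dtv :: "nat pmf \<Rightarrow> nat pmf \<Rightarrow> real" where
  "dtv p q = (SUP A. \<bar>measure_pmf.prob p A - measure_pmf.prob q A\<bar>)"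

definition valid_instance :: "real \<Rightarrow> real \<Rightarrow> nat \<Rightarrow> nat \<Rightarrow> (nat \<Rightarrow> nat pmf)
    \<Rightarrow> (nat \<Rightarrow> nat \<Rightarrow> bool \<Rightarrow> nat \<Rightarrow> nat pmf)
    \<Rightarrow> (nat \<Rightarrow> nat \<Rightarrow> nat \<Rightarrow> bool \<Rightarrow> real) \<Rightarrow> (nat \<Rightarrow> nat \<Rightarrow> nat \<Rightarrow> bool \<Rightarrow> real pmf) \<Rightarrow> bool" where
  "valid_instance \<sigma> tmix N T init P mu noise \<longleftrightarrow>
     (\<forall>i<N. \<forall>t\<in>{1..T}. \<forall>s w. 0 \<le> mu i t s w \<and> mu i t s w \<le> 1) \<and>
     (\<forall>i<N. \<forall>t\<in>{1..T}. \<forall>s w.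
        integrable (measure_pmf (noise i t s w)) (\<lambda>e. e) \<and>
        integrable (measure_pmf (noise i t s w)) (\<lambda>e. e\<^sup>2) \<and>
        measure_pmf.expectation (noise i t s w) (\<lambda>e. e) = 0 \<and>
        measure_pmf.expectation (noise i t s w) (\<lambda>e. e\<^sup>2) \<le> \<sigma>\<^sup>2) \<and>
     (\<forall>i<N. \<forall>t\<in>{1..T}. \<forall>w f f'.
        dtv (bind_pmf f (P i t w)) (bind_pmf f' (P i t w)) \<le> exp (- 1 / tmix) * dtv f f')"

definition const_design :: "bool \<Rightarrow> design" where
  "const_design b = (\<lambda>W Y t. return_pmf (\<lambda>i. b))"

definition GATE :: "nat \<Rightarrow> nat \<Rightarrow> (nat \<Rightarrow> nat pmf) \<Rightarrow> (nat \<Rightarrow> nat \<Rightarrow> bool \<Rightarrow> nat \<Rightarrow> nat pmf)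
    \<Rightarrow> (nat \<Rightarrow> nat \<Rightarrow> nat \<Rightarrow> bool \<Rightarrow> real) \<Rightarrow> (nat \<Rightarrow> nat \<Rightarrow> nat \<Rightarrow> bool \<Rightarrow> real pmf) \<Rightarrow> real" where
  "GATE N T init P mu noise =
     (1 / (real N * real T)) *
     (\<Sum>i<N. \<Sum>t\<in>{1..T}.
        measure_pmf.expectation (traj N init P mu noise (const_design True) T) (\<lambda>(S, W, Y). Y i t)
      - measure_pmf.expectation (traj N init P mu noise (const_design False) T) (\<lambda>(S, W, Y). Y i t))"

definition MSE :: "nat \<Rightarrow> nat \<Rightarrow> (nat \<Rightarrow> nat pmf) \<Rightarrow> (nat \<Rightarrow> nat \<Rightarrow> bool \<Rightarrow> nat \<Rightarrow> nat pmf)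
    \<Rightarrow> (nat \<Rightarrow> nat \<Rightarrow> nat \<Rightarrow> bool \<Rightarrow> real) \<Rightarrow> (nat \<Rightarrow> nat \<Rightarrow> nat \<Rightarrow> bool \<Rightarrow> real pmf)
    \<Rightarrow> design \<Rightarrow> ((nat \<Rightarrow> nat \<Rightarrow> bool) \<Rightarrow> (nat \<Rightarrow> nat \<Rightarrow> real) \<Rightarrow> real) \<Rightarrow> ennreal" where
  "MSE N T init P mu noise design est =
     (\<integral>\<^sup>+ (S, W, Y). ennreal ((est W Y - GATE N T init P mu noise)\<^sup>2)
        \<partial>measure_pmf (traj N init P mu noise design T))"

end

theory Submission
  imports Defs
begin


definition ind :: "bool \<Rightarrow> real" where "ind b = (if b then 1 else 0)"

type_synonym obs = "(nat \<Rightarrow> nat \<Rightarrow> bool) \<times> (nat \<Rightarrow> nat \<Rightarrow> real)"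
type_synonym pos = "nat \<times> nat \<times> bool"

definition extO :: "nat \<Rightarrow> obs \<Rightarrow> nat \<Rightarrow> (nat \<Rightarrow> bool) \<Rightarrow> (nat \<Rightarrow> real) \<Rightarrow> obs" where
  "extO N ob t w y = (case ob of (W, Y) \<Rightarrow> (\<lambda>i u. if u = t then (i < N \<and> w i) else W i u,
                      \<lambda>i u. if u = t then y i else Y i u))"

definition ob0 :: obs where "ob0 = (\<lambda>i u. False, \<lambda>i u. 0)"

fun trZ :: "nat \<Rightarrow> design \<Rightarrow> (pos \<Rightarrow> bool) \<Rightarrow> nat \<Rightarrow> obs pmf" where
  "trZ N design Z 0 = return_pmf ob0"
| "trZ N design Z (Suc k) = bind_pmf (trZ N design Z k) (\<lambda>ob.
     bind_pmf (design (fst ob) (snd ob) (Suc k)) (\<lambda>w.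
     return_pmf (extO N ob (Suc k) w (\<lambda>i. if i < N then ind (Z (i, Suc k, w i)) else 0))))"

definition muZ :: "(pos \<Rightarrow> bool) \<Rightarrow> nat \<Rightarrow> nat \<Rightarrow> nat \<Rightarrow> bool \<Rightarrow> real" where
  "muZ Z i t s w = ind (Z (i, t, w))"

definition init0 :: "nat \<Rightarrow> nat pmf" where "init0 = (\<lambda>i. return_pmf 0)"
definition P0 :: "nat \<Rightarrow> nat \<Rightarrow> bool \<Rightarrow> nat \<Rightarrow> nat pmf" where "P0 = (\<lambda>i t w s. return_pmf 0)"
definition noise0 :: "nat \<Rightarrow> nat \<Rightarrow> nat \<Rightarrow> bool \<Rightarrow> real pmf" where "noise0 = (\<lambda>i t s w. return_pmf 0)"

definition addS :: "obs \<Rightarrow> trajectory" where "addS ob = (\<lambda>i u. 0, fst ob, snd ob)"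

lemma traj_eq: "traj N init0 P0 (muZ Z) noise0 design k = map_pmf addS (trZ N design Z k)"
proof (induction k)
  case 0
  show ?case by (simp add: init0_def addS_def ob0_def)
next
  case (Suc k)
  show ?case
    apply (simp only: traj.simps trZ.simps Suc map_bind_pmf bind_map_pmf)
    apply (rule bind_pmf_cong[OF refl])
    apply (auto simp add: addS_def P0_def noise0_def muZ_def map_bind_pmf extO_def bind_return_pmf split: prod.splits)
    done
qed

lemma trZ_const: "trZ N (const_design b) Z k = return_pmf
  (\<lambda>i u. 1 \<le> u \<and> u \<le> k \<and> i < N \<and> b,
   \<lambda>i u. if 1 \<le> u \<and> u \<le> k \<and> i < N then ind (Z (i, u, b)) else 0)"
proof (induction k)
  case 0
  then show ?case by (simp add: ob0_def fun_eq_iff)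
next
  case (Suc k)
  show ?case
    by (simp only: trZ.simps Suc) (auto simp add: const_design_def bind_return_pmf extO_def fun_eq_iff le_Suc_eq)
qed

lemma GATE_eq:
  assumes "1 \<le> T"
  shows "GATE N T init0 P0 (muZ Z) noise0 =
    (1 / (real N * real T)) * (\<Sum>i<N. \<Sum>t\<in>{1..T}. ind (Z (i, t, True)) - ind (Z (i, t, False)))"
  unfolding GATE_def traj_eq trZ_const
  by (simp add: addS_def)

definition coin :: "bool pmf" where "coin = bernoulli_pmf (1/2)"
definition Dset :: "nat \<Rightarrow> nat \<Rightarrow> pos set" where "Dset N T = {..<N} \<times> {1..T} \<times> UNIV"
definition prior :: "nat \<Rightarrow> nat \<Rightarrow> (pos \<Rightarrow> bool) pmf" where
  "prior N T = Pi_pmf (Dset N T) False (\<lambda>_. coin)"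

lemma finite_Dset: "finite (Dset N T)"
  unfolding Dset_def by auto

lemma resample1:
  assumes "finite D" "d \<in> D"
  shows "bind_pmf (Pi_pmf D False (\<lambda>_. coin)) g =
         bind_pmf coin (\<lambda>c. bind_pmf (Pi_pmf D False (\<lambda>_. coin)) (\<lambda>U. g (U(d := c))))"
proof -
  have D: "D = insert d (D - {d})" using assms by auto
  have fin: "finite (D - {d})" using assms by auto
  let ?P = "Pi_pmf (D - {d}) False (\<lambda>_. coin)"
  have eq: "Pi_pmf D False (\<lambda>_. coin) = do {y \<leftarrow> coin; f \<leftarrow> ?P; return_pmf (f(d := y))}"
    by (subst D, subst Pi_pmf_insert'[OF fin]) auto
  have "bind_pmf (Pi_pmf D False (\<lambda>_. coin)) g = bind_pmf coin (\<lambda>y. bind_pmf ?P (\<lambda>f. g (f(d := y))))"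
    by (simp add: eq bind_assoc_pmf bind_return_pmf)
  also have "\<dots> = bind_pmf coin (\<lambda>c. bind_pmf coin (\<lambda>y. bind_pmf ?P (\<lambda>f. g (f(d := y, d := c)))))"
    by simp
  also have "\<dots> = bind_pmf coin (\<lambda>c. bind_pmf (Pi_pmf D False (\<lambda>_. coin)) (\<lambda>U. g (U(d := c))))"
    by (simp add: eq bind_assoc_pmf bind_return_pmf)
  finally show ?thesis .
qed

definition upd :: "nat \<Rightarrow> (nat \<Rightarrow> bool) \<Rightarrow> nat \<Rightarrow> (nat \<Rightarrow> bool) \<Rightarrow> (pos \<Rightarrow> bool) \<Rightarrow> pos \<Rightarrow> bool" where
  "upd t w n b U = (\<lambda>(i, t', v). if i < n \<and> t' = t \<and> v = w i then b i else U (i, t', v))"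

lemma upd_Suc: "upd t w (Suc n) (b(n := y)) U = upd t w n b (U((n, t, w n) := y))"
  by (auto simp: upd_def fun_eq_iff)

lemma upd_0: "upd t w 0 b U = U"
  by (auto simp: upd_def fun_eq_iff)

lemma resampleN:
  assumes "t \<in> {1..T}" "n \<le> N"
  shows "bind_pmf (prior N T) g =
     bind_pmf (Pi_pmf {..<n} False (\<lambda>_. coin)) (\<lambda>b. bind_pmf (prior N T) (\<lambda>U. g (upd t w n b U)))"
  using assms(2)
proof (induction n)
  case 0
  then show ?case by (simp add: upd_0 bind_return_pmf)
next
  case (Suc n)
  let ?P = "Pi_pmf {..<n} False (\<lambda>_. coin)"
  have d: "(n, t, w n) \<in> Dset N T" using Suc.prems assms(1) by (auto simp: Dset_def)
  have "bind_pmf (Pi_pmf {..<Suc n} False (\<lambda>_. coin)) (\<lambda>b. bind_pmf (prior N T) (\<lambda>U. g (upd t w (Suc n) b U)))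
      = bind_pmf coin (\<lambda>y. bind_pmf ?P (\<lambda>b. bind_pmf (prior N T) (\<lambda>U. g (upd t w n b (U((n, t, w n) := y))))))"
    by (simp add: lessThan_Suc Pi_pmf_insert' bind_assoc_pmf bind_return_pmf upd_Suc)
  also have "\<dots> = bind_pmf ?P (\<lambda>b. bind_pmf coin (\<lambda>y. bind_pmf (prior N T) (\<lambda>U. g (upd t w n b (U((n, t, w n) := y))))))"
    by (rule bind_commute_pmf)
  also have "\<dots> = bind_pmf ?P (\<lambda>b. bind_pmf (prior N T) (\<lambda>U. g (upd t w n b U)))"
    unfolding prior_def
    by (subst resample1[OF finite_Dset d]) simp
  also have "\<dots> = bind_pmf (prior N T) g"
    using Suc by simp
  finally show ?case by simp
qed

lemma resample_bits:
  assumes "t \<in> {1..T}"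
  shows "bind_pmf (prior N T) (\<lambda>U. f U (\<lambda>i. i < N \<and> U (i, t, w i))) =
     bind_pmf (Pi_pmf {..<N} False (\<lambda>_. coin)) (\<lambda>b. bind_pmf (prior N T) (\<lambda>U. f (upd t w N b U) b))"
proof -
  have "bind_pmf (prior N T) (\<lambda>U. f U (\<lambda>i. i < N \<and> U (i, t, w i))) =
     bind_pmf (Pi_pmf {..<N} False (\<lambda>_. coin)) (\<lambda>b. bind_pmf (prior N T)
        (\<lambda>U. f (upd t w N b U) (\<lambda>i. i < N \<and> upd t w N b U (i, t, w i))))"
    by (rule resampleN[OF assms order.refl])
  also have "\<dots> = bind_pmf (Pi_pmf {..<N} False (\<lambda>_. coin)) (\<lambda>b. bind_pmf (prior N T) (\<lambda>U. f (upd t w N b U) b))"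
  proof (rule bind_pmf_cong[OF refl])
    fix b assume "b \<in> set_pmf (Pi_pmf {..<N} False (\<lambda>_. coin))"
    then have "\<forall>i. i \<notin> {..<N} \<longrightarrow> b i = False" using set_Pi_pmf_subset[of "{..<N}" False] by blast
    then have "(\<lambda>i. i < N \<and> upd t w N b U (i, t, w i)) = b" for U
      by (auto simp: upd_def fun_eq_iff)
    then show "bind_pmf (prior N T) (\<lambda>U. f (upd t w N b U) (\<lambda>i. i < N \<and> upd t w N b U (i, t, w i))) =
         bind_pmf (prior N T) (\<lambda>U. f (upd t w N b U) b)" by simp
  qed
  finally show ?thesis .
qed

fun trU :: "nat \<Rightarrow> design \<Rightarrow> nat \<Rightarrow> obs pmf" where
  "trU N design 0 = return_pmf ob0"
| "trU N design (Suc k) = bind_pmf (trU N design k) (\<lambda>ob.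
     bind_pmf (design (fst ob) (snd ob) (Suc k)) (\<lambda>w.
     bind_pmf (Pi_pmf {..<N} False (\<lambda>_. coin)) (\<lambda>b.
     return_pmf (extO N ob (Suc k) w (\<lambda>i. if i < N then ind (b i) else 0)))))"

definition mergeO :: "nat \<Rightarrow> nat \<Rightarrow> obs \<Rightarrow> (pos \<Rightarrow> bool) \<Rightarrow> pos \<Rightarrow> bool" where
  "mergeO N k ob U = (\<lambda>(i, t, v). if i < N \<and> 1 \<le> t \<and> t \<le> k \<and> fst ob i t = v then snd ob i t = 1 else U (i, t, v))"

lemma merge_upd:
  "mergeO N k ob (upd (Suc k) w N b U) =
   mergeO N (Suc k) (extO N ob (Suc k) w (\<lambda>i. if i < N then ind (b i) else 0)) U"
  by (auto simp: mergeO_def upd_def extO_def fun_eq_iff ind_def split: prod.splits)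

lemma merge_bits:
  "(\<lambda>i. if i < N then ind (mergeO N k ob U (i, Suc k, w i)) else 0) =
   (\<lambda>i. if i < N then ind ((\<lambda>i. i < N \<and> U (i, Suc k, w i)) i) else 0)"
  by (auto simp: mergeO_def fun_eq_iff)

lemma claim:
  assumes "k \<le> T"
  shows "bind_pmf (prior N T) (\<lambda>Z. bind_pmf (trZ N design Z k) (\<lambda>ob. return_pmf (Z, ob))) =
         bind_pmf (trU N design k) (\<lambda>ob. bind_pmf (prior N T) (\<lambda>U. return_pmf (mergeO N k ob U, ob)))"
  using assms
proof (induction k)
  case 0
  have "mergeO N 0 ob U = U" for ob U by (auto simp: mergeO_def fun_eq_iff)
  then show ?case by (simp add: bind_return_pmf)
next
  case (Suc k)
  have IH: "bind_pmf (prior N T) (\<lambda>Z. bind_pmf (trZ N design Z k) (\<lambda>ob. return_pmf (Z, ob))) =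
         bind_pmf (trU N design k) (\<lambda>ob. bind_pmf (prior N T) (\<lambda>U. return_pmf (mergeO N k ob U, ob)))"
    using Suc by simp
  have t: "Suc k \<in> {1..T}" using Suc.prems by simp
  let ?F = "\<lambda>(Z, ob). bind_pmf (design (fst ob) (snd ob) (Suc k)) (\<lambda>w.
        return_pmf (Z, extO N ob (Suc k) w (\<lambda>i. if i < N then ind (Z (i, Suc k, w i)) else 0)))"
  have "bind_pmf (prior N T) (\<lambda>Z. bind_pmf (trZ N design Z (Suc k)) (\<lambda>ob. return_pmf (Z, ob)))
     = bind_pmf (bind_pmf (prior N T) (\<lambda>Z. bind_pmf (trZ N design Z k) (\<lambda>ob. return_pmf (Z, ob)))) ?F"
    by (simp add: bind_assoc_pmf bind_return_pmf)
  also have "\<dots> = bind_pmf (bind_pmf (trU N design k) (\<lambda>ob. bind_pmf (prior N T) (\<lambda>U. return_pmf (mergeO N k ob U, ob)))) ?F"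
    by (simp only: IH)
  also have "\<dots> = bind_pmf (trU N design k) (\<lambda>ob. bind_pmf (prior N T) (\<lambda>U.
       bind_pmf (design (fst ob) (snd ob) (Suc k)) (\<lambda>w.
        return_pmf (mergeO N k ob U, extO N ob (Suc k) w (\<lambda>i. if i < N then ind (mergeO N k ob U (i, Suc k, w i)) else 0)))))"
    by (simp add: bind_assoc_pmf bind_return_pmf)
  also have "\<dots> = bind_pmf (trU N design k) (\<lambda>ob.
       bind_pmf (design (fst ob) (snd ob) (Suc k)) (\<lambda>w. bind_pmf (prior N T) (\<lambda>U.
        return_pmf (mergeO N k ob U, extO N ob (Suc k) w (\<lambda>i. if i < N then ind (mergeO N k ob U (i, Suc k, w i)) else 0)))))"
    by (subst bind_commute_pmf) (rule refl)
  also have "\<dots> = bind_pmf (trU N design k) (\<lambda>ob.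
       bind_pmf (design (fst ob) (snd ob) (Suc k)) (\<lambda>w.
       bind_pmf (Pi_pmf {..<N} False (\<lambda>_. coin)) (\<lambda>b. bind_pmf (prior N T) (\<lambda>U.
        return_pmf (mergeO N k ob (upd (Suc k) w N b U), extO N ob (Suc k) w (\<lambda>i. if i < N then ind (b i) else 0))))))"
    unfolding merge_bits
    by (subst resample_bits[OF t]) (rule refl)
  also have "\<dots> = bind_pmf (trU N design (Suc k)) (\<lambda>ob. bind_pmf (prior N T) (\<lambda>U. return_pmf (mergeO N (Suc k) ob U, ob)))"
    by (simp add: bind_assoc_pmf bind_return_pmf merge_upd)
  finally show ?case .
qed




definition X :: "bool \<Rightarrow> real" where "X b = ind b - 1/2"

definition Ssum :: "('c \<Rightarrow> pos) \<Rightarrow> ('c \<Rightarrow> real) \<Rightarrow> 'c set \<Rightarrow> (pos \<Rightarrow> bool) \<Rightarrow> real" where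
  "Ssum h sg A U = (\<Sum>c\<in>A. sg c * X (U (h c)))"

lemma nn_resample:
  assumes "p \<in> Dset N T"
  shows "(\<integral>\<^sup>+U. f U \<partial>prior N T) =
    (\<integral>\<^sup>+U. f (U(p := True)) \<partial>prior N T) * ennreal (1/2) + (\<integral>\<^sup>+U. f (U(p := False)) \<partial>prior N T) * ennreal (1/2)"
proof -
  have "prior N T = bind_pmf (prior N T) return_pmf" by (simp add: bind_return_pmf')
  also have "\<dots> = bind_pmf coin (\<lambda>c. bind_pmf (prior N T) (\<lambda>U. return_pmf (U(p := c))))"
    unfolding prior_def by (rule resample1[OF finite_Dset assms[unfolded prior_def]])
  finally have eq: "prior N T = bind_pmf coin (\<lambda>c. bind_pmf (prior N T) (\<lambda>U. return_pmf (U(p := c))))" .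
  show ?thesis
    apply (subst eq)
    apply (simp add: coin_def nn_integral_return)
    done
qed

lemma varlb:
  assumes "finite A" "inj_on h A" "h ` A \<subseteq> Dset N T" "\<And>c. c \<in> A \<Longrightarrow> (sg c)\<^sup>2 = 1"
  shows "(\<integral>\<^sup>+U. ennreal ((a - Ssum h sg A U)\<^sup>2) \<partial>prior N T) \<ge> ennreal (real (card A) / 4)"
  using assms
proof (induction A rule: finite_induct)
  case empty
  then show ?case by simp
next
  case (insert c A)
  let ?p = "h c"
  have p: "?p \<in> Dset N T" using insert by auto
  have notin: "?p \<notin> h ` A" using insert by auto
  have SA: "Ssum h sg A (U(?p := b)) = Ssum h sg A U" for U b
    unfolding Ssum_def using notin by (intro sum.cong refl) (metis fun_upd_other imageI)
  have Sins: "Ssum h sg (insert c A) U = sg c * X (U ?p) + Ssum h sg A U" for U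
    unfolding Ssum_def using insert by simp
  have sg2: "(sg c)\<^sup>2 = 1" using insert by simp
  have pt: "ennreal ((a - (sg c * X True + Ssum h sg A U))\<^sup>2) * ennreal (1/2) +
            ennreal ((a - (sg c * X False + Ssum h sg A U))\<^sup>2) * ennreal (1/2)
         = ennreal ((a - Ssum h sg A U)\<^sup>2) + ennreal (1/4)" for U
  proof -
    define x where "x = (a - (sg c * X True + Ssum h sg A U))\<^sup>2"
    define y where "y = (a - (sg c * X False + Ssum h sg A U))\<^sup>2"
    define z where "z = (a - Ssum h sg A U)\<^sup>2"
    have e: "x * (1/2) + y * (1/2) = z + 1/4"
      unfolding x_def y_def z_def using sg2 by (simp add: X_def ind_def power2_eq_square algebra_simps)
    have x0: "0 \<le> x" "0 \<le> y" "0 \<le> z" unfolding x_def y_def z_def by auto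
    have h1: "ennreal (x * (1/2)) = ennreal x * ennreal (1/2)" by (rule ennreal_mult) (use x0 in auto)
    have h2: "ennreal (y * (1/2)) = ennreal y * ennreal (1/2)" by (rule ennreal_mult) (use x0 in auto)
    have h3: "ennreal (x * (1/2) + y * (1/2)) = ennreal (x * (1/2)) + ennreal (y * (1/2))"
      by (rule ennreal_plus) (use x0 in auto)
    have h4: "ennreal (z + 1/4) = ennreal z + ennreal (1/4)" by (rule ennreal_plus) (use x0 in auto)
    have "ennreal x * ennreal (1/2) + ennreal y * ennreal (1/2) = ennreal z + ennreal (1/4)"
      unfolding h1[symmetric] h2[symmetric] h3[symmetric] e h4 ..
    then show ?thesis unfolding x_def y_def z_def .
  qed
  have "(\<integral>\<^sup>+U. ennreal ((a - Ssum h sg (insert c A) U)\<^sup>2) \<partial>prior N T)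
      = (\<integral>\<^sup>+U. ennreal ((a - (sg c * X True + Ssum h sg A U))\<^sup>2) \<partial>prior N T) * ennreal (1/2) +
        (\<integral>\<^sup>+U. ennreal ((a - (sg c * X False + Ssum h sg A U))\<^sup>2) \<partial>prior N T) * ennreal (1/2)"
    by (subst nn_resample[OF p]) (simp add: Sins SA)
  also have "\<dots> = (\<integral>\<^sup>+U. ennreal ((a - (sg c * X True + Ssum h sg A U))\<^sup>2) * ennreal (1/2) +
        ennreal ((a - (sg c * X False + Ssum h sg A U))\<^sup>2) * ennreal (1/2) \<partial>prior N T)"
    by (simp add: nn_integral_add nn_integral_multc)
  also have "\<dots> = (\<integral>\<^sup>+U. ennreal ((a - Ssum h sg A U)\<^sup>2) + ennreal (1/4) \<partial>prior N T)"
    by (simp only: pt)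
  also have "\<dots> = (\<integral>\<^sup>+U. ennreal ((a - Ssum h sg A U)\<^sup>2) \<partial>prior N T) + ennreal (1/4)"
    by (simp add: nn_integral_add)
  also have "\<dots> \<ge> ennreal (real (card A) / 4) + ennreal (1/4)"
    using insert by (intro add_right_mono) auto
  finally show ?case
    using insert by (simp add: ennreal_plus[symmetric] del: ennreal_plus) (simp add: field_simps)
qed




definition Gs :: "nat \<Rightarrow> nat \<Rightarrow> (pos \<Rightarrow> bool) \<Rightarrow> real" where
  "Gs N T Z = (\<Sum>i<N. \<Sum>t\<in>{1..T}. ind (Z (i, t, True)) - ind (Z (i, t, False)))"

definition hh :: "obs \<Rightarrow> nat \<times> nat \<Rightarrow> pos" where
  "hh ob = (\<lambda>(i, t). (i, t, \<not> fst ob i t))"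
definition sgg :: "obs \<Rightarrow> nat \<times> nat \<Rightarrow> real" where
  "sgg ob = (\<lambda>(i, t). if fst ob i t then -1 else 1)"
definition Cst :: "nat \<Rightarrow> nat \<Rightarrow> obs \<Rightarrow> real" where
  "Cst N T ob = (\<Sum>i<N. \<Sum>t\<in>{1..T}. (if fst ob i t then ind (snd ob i t = 1) - 1/2 else 1/2 - ind (snd ob i t = 1)))"

lemma Gs_merge:
  "Gs N T (mergeO N T ob U) = Cst N T ob + Ssum (hh ob) (sgg ob) ({..<N} \<times> {1..T}) U"
proof -
  have "Ssum (hh ob) (sgg ob) ({..<N} \<times> {1..T}) U =
        (\<Sum>i<N. \<Sum>t\<in>{1..T}. sgg ob (i, t) * X (U (hh ob (i, t))))"
    unfolding Ssum_def by (simp add: sum.cartesian_product)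
  then have "Cst N T ob + Ssum (hh ob) (sgg ob) ({..<N} \<times> {1..T}) U =
     (\<Sum>i<N. \<Sum>t\<in>{1..T}. (if fst ob i t then ind (snd ob i t = 1) - 1/2 else 1/2 - ind (snd ob i t = 1))
        + sgg ob (i, t) * X (U (hh ob (i, t))))"
    unfolding Cst_def by (simp add: sum.distrib)
  also have "\<dots> = Gs N T (mergeO N T ob U)"
    unfolding Gs_def
    by (intro sum.cong refl) (auto simp: mergeO_def sgg_def hh_def X_def)
  finally show ?thesis by simp
qed

lemma one_ob:
  assumes "N \<ge> 1" "T \<ge> 1"
  shows "(\<integral>\<^sup>+U. ennreal ((e - (1 / (real N * real T)) * Gs N T (mergeO N T ob U))\<^sup>2) \<partial>prior N T)
         \<ge> ennreal (1 / (4 * real N * real T))"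
proof -
  let ?A = "{..<N} \<times> {1..T}"
  let ?n = "real N * real T"
  have n0: "?n > 0" using assms by simp
  have cardA: "card ?A = N * T" by (simp add: card_cartesian_product)
  have inj: "inj_on (hh ob) ?A" by (auto simp: inj_on_def hh_def)
  have sub: "hh ob ` ?A \<subseteq> Dset N T" by (auto simp: hh_def Dset_def)
  have sg: "(sgg ob c)\<^sup>2 = 1" for c by (auto simp: sgg_def split: prod.splits)
  have pt: "ennreal ((e - (1 / ?n) * Gs N T (mergeO N T ob U))\<^sup>2) =
        ennreal ((?n * e - Cst N T ob - Ssum (hh ob) (sgg ob) ?A U)\<^sup>2) * ennreal (1 / ?n\<^sup>2)" for U
  proof -
    have "(e - (1 / ?n) * Gs N T (mergeO N T ob U))\<^sup>2 =
          (?n * e - Cst N T ob - Ssum (hh ob) (sgg ob) ?A U)\<^sup>2 * (1 / ?n\<^sup>2)"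
    proof -
      have gen: "(e - (1 / n) * G)\<^sup>2 = (n * e - G)\<^sup>2 * (1 / n\<^sup>2)" if "n > 0" for n G :: real
      proof -
        have "e - (1 / n) * G = (n * e - G) / n" using that by (simp add: field_simps)
        then show ?thesis by (simp add: power_divide)
      qed
      show ?thesis unfolding Gs_merge using gen[OF n0, of "Cst N T ob + Ssum (hh ob) (sgg ob) ?A U"]
        by (simp add: algebra_simps)
    qed
    then show ?thesis by (simp add: ennreal_mult[symmetric])
  qed
  have "(\<integral>\<^sup>+U. ennreal ((e - (1 / ?n) * Gs N T (mergeO N T ob U))\<^sup>2) \<partial>prior N T)
      = (\<integral>\<^sup>+U. ennreal ((?n * e - Cst N T ob - Ssum (hh ob) (sgg ob) ?A U)\<^sup>2) \<partial>prior N T) * ennreal (1 / ?n\<^sup>2)"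
    by (simp only: pt) (simp add: nn_integral_multc)
  also have "\<dots> \<ge> ennreal (real (card ?A) / 4) * ennreal (1 / ?n\<^sup>2)"
    by (intro mult_right_mono varlb[OF _ inj sub sg]) auto
  finally have *: "ennreal (real (card ?A) / 4) * ennreal (1 / ?n\<^sup>2) \<le> (\<integral>\<^sup>+U. ennreal ((e - (1 / ?n) * Gs N T (mergeO N T ob U))\<^sup>2) \<partial>prior N T)" .
  have "ennreal (real (card ?A) / 4) * ennreal (1 / ?n\<^sup>2) = ennreal (real (card ?A) / 4 * (1 / ?n\<^sup>2))"
    by (simp add: ennreal_mult[symmetric])
  also have "real (card ?A) / 4 * (1 / ?n\<^sup>2) = 1 / (4 * real N * real T)"
    unfolding cardA using n0 by (simp add: field_simps power2_eq_square)
  finally show ?thesis using * by simp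
qed

lemma dtv_nonneg: "0 \<le> dtv p q"
  unfolding dtv_def
proof (rule cSUP_upper2[where x = "{}"])
  show "bdd_above (range (\<lambda>A. \<bar>measure_pmf.prob p A - measure_pmf.prob q A\<bar>))"
  proof (rule bdd_aboveI[where M = 1], clarify)
    fix A
    have "measure_pmf.prob p A \<le> 1" "measure_pmf.prob q A \<le> 1" "0 \<le> measure_pmf.prob p A" "0 \<le> measure_pmf.prob q A"
      by auto
    then show "\<bar>measure_pmf.prob p A - measure_pmf.prob q A\<bar> \<le> 1" by linarith
  qed
qed auto

lemma valid:
  assumes "\<sigma> \<ge> 0"
  shows "valid_instance \<sigma> tmix N T init0 P0 (muZ Z) noise0"
proof -
  have d: "dtv (return_pmf 0) (return_pmf 0) = 0" unfolding dtv_def by simp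
  show ?thesis
    unfolding valid_instance_def
    using dtv_nonneg
    by (auto simp: muZ_def ind_def noise0_def P0_def d integrable_measure_pmf_finite)
qed




lemma MSE_eq:
  assumes "T \<ge> 1"
  shows "MSE N T init0 P0 (muZ Z) noise0 design est =
    (\<integral>\<^sup>+ob. ennreal ((est (fst ob) (snd ob) - (1 / (real N * real T)) * Gs N T Z)\<^sup>2) \<partial>trZ N design Z T)"
  unfolding MSE_def traj_eq GATE_eq[OF assms] Gs_def[symmetric]
  by (simp add: map_pmf_def nn_integral_return addS_def case_prod_beta)

lemma bayes:
  assumes "N \<ge> 1" "T \<ge> 1"
  shows "(\<integral>\<^sup>+Z. MSE N T init0 P0 (muZ Z) noise0 design est \<partial>prior N T) \<ge> ennreal (1 / (4 * real N * real T))"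
proof -
  let ?H = "\<lambda>Z ob. ennreal ((est (fst ob) (snd ob) - (1 / (real N * real T)) * Gs N T Z)\<^sup>2)"
  have "(\<integral>\<^sup>+Z. MSE N T init0 P0 (muZ Z) noise0 design est \<partial>prior N T)
      = (\<integral>\<^sup>+Z. (\<integral>\<^sup>+ob. ?H Z ob \<partial>trZ N design Z T) \<partial>prior N T)"
    by (simp add: MSE_eq[OF assms(2)])
  also have "\<dots> = (\<integral>\<^sup>+p. ?H (fst p) (snd p) \<partial>bind_pmf (prior N T) (\<lambda>Z. bind_pmf (trZ N design Z T) (\<lambda>ob. return_pmf (Z, ob))))"
    by (simp add: nn_integral_return)
  also have "\<dots> = (\<integral>\<^sup>+p. ?H (fst p) (snd p) \<partial>bind_pmf (trU N design T) (\<lambda>ob. bind_pmf (prior N T) (\<lambda>U. return_pmf (mergeO N T ob U, ob))))"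
    by (simp only: claim[OF order.refl])
  also have "\<dots> = (\<integral>\<^sup>+ob. (\<integral>\<^sup>+U. ?H (mergeO N T ob U) ob \<partial>prior N T) \<partial>trU N design T)"
    by (simp add: nn_integral_return)
  also have "\<dots> \<ge> (\<integral>\<^sup>+ob. ennreal (1 / (4 * real N * real T)) \<partial>trU N design T)"
    by (intro nn_integral_mono one_ob[OF assms])
  finally show ?thesis by simp
qed

theorem mainTheorem7:
  shows "\<exists>c>0. \<forall>(\<sigma>::real) (tmix::real) (N::nat) (T::nat) (design::design)
            (est::(nat \<Rightarrow> nat \<Rightarrow> bool) \<Rightarrow> (nat \<Rightarrow> nat \<Rightarrow> real) \<Rightarrow> real).
     \<sigma> \<ge> 0 \<longrightarrow> tmix > 0 \<longrightarrow> N \<ge> 1 \<longrightarrow> T \<ge> 1 \<longrightarrow>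
     (\<exists>init P mu noise. valid_instance \<sigma> tmix N T init P mu noise \<and>
        MSE N T init P mu noise design est \<ge> ennreal (c / (real N * real T)))"
proof (rule exI[where x = "1/8"], intro conjI allI impI)
  show "(0::real) < 1/8" by simp
  fix \<sigma> tmix :: real and N T :: nat and design :: design
    and est :: "(nat \<Rightarrow> nat \<Rightarrow> bool) \<Rightarrow> (nat \<Rightarrow> nat \<Rightarrow> real) \<Rightarrow> real"
  assume h: "\<sigma> \<ge> 0" "tmix > 0" "N \<ge> 1" "T \<ge> 1"
  show "\<exists>init P mu noise. valid_instance \<sigma> tmix N T init P mu noise \<and>
        MSE N T init P mu noise design est \<ge> ennreal (1/8 / (real N * real T))"
  proof (rule ccontr)
    assume "\<not> ?thesis"
    then have lt: "MSE N T init0 P0 (muZ Z) noise0 design est < ennreal (1/8 / (real N * real T))" for Z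
      using valid[OF h(1)] by (meson not_le)
    have "(\<integral>\<^sup>+Z. MSE N T init0 P0 (muZ Z) noise0 design est \<partial>prior N T) \<le>
          (\<integral>\<^sup>+Z. ennreal (1/8 / (real N * real T)) \<partial>prior N T)"
      by (intro nn_integral_mono less_imp_le lt)
    also have "\<dots> = ennreal (1/8 / (real N * real T))" by simp
    also have "\<dots> < ennreal (1 / (4 * real N * real T))"
      using h by (subst ennreal_less_iff) (auto simp: field_simps)
    finally show False using bayes[OF h(3,4), of design est] by simp
  qed
qed


end
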